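(* If projections $e$ and $f$ in a generalized Rickart $*$-ring $R$ are very orthogonal, then $e,f$ are orthogonal (i.e. $ef=0$), $GRP(e)\,GLP(f)=0$, and $eRf=0$.
   Context: A $*$-ring is an associative ring $R$ with an involution $x\mapsto x^*$ (additive, $(xy)^*=y^*x^*$, $x^{**}=x$). A projection is an element $e$ with $e=e^*=e^2$. For $a\in R$, $r(a)=\{b: ab=0\}$. $R$ is a generalized Rickart $*$-ring if for every $x$ there exist $n\ge1$ and a projection $g$ with $r(x^n)=gR$. $GRP(x)=e$ means $e$ is a projection and there is $n\in\mathbb N$ with $x^ne=x^n$ and $x^ny=0\Rightarrow ey=0$ for all $y$; $GLP(x)=f$ means $f$ is a projection and there is $n$ with $fx^n=x^n$ and $yx^n=0\Rightarrow yf=0$ for all $y$. Projections $e,f$ are very orthogonal if there is a central projection $h$ with $he=e$ and $hf=0$. *)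

theory Defs
  imports Main
begin

definition involution :: "('a::ring_1 \<Rightarrow> 'a) \<Rightarrow> bool" where
  "involution s \<longleftrightarrow> (\<forall>x y. s (x + y) = s x + s y) \<and> (\<forall>x y. s (x * y) = s y * s x)
     \<and> (\<forall>x. s (s x) = x)"

definition projection :: "('a::ring_1 \<Rightarrow> 'a) \<Rightarrow> 'a \<Rightarrow> bool" where
  "projection s e \<longleftrightarrow> e = s e \<and> e = e * e"

definition rann :: "'a::ring_1 \<Rightarrow> 'a set" where
  "rann a = {b. a * b = 0}"

definition gen_rickart :: "('a::ring_1 \<Rightarrow> 'a) \<Rightarrow> bool" where
  "gen_rickart s \<longleftrightarrow> (\<forall>x. \<exists>n\<ge>1. \<exists>g. projection s g \<and> rann (x ^ n) = (\<lambda>r. g * r) ` UNIV)"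

definition GRP :: "('a::ring_1 \<Rightarrow> 'a) \<Rightarrow> 'a \<Rightarrow> 'a \<Rightarrow> bool" where
  "GRP s x e \<longleftrightarrow> projection s e \<and>
     (\<exists>n\<ge>1. x ^ n * e = x ^ n \<and> (\<forall>y. x ^ n * y = 0 \<longrightarrow> e * y = 0))"

definition GLP :: "('a::ring_1 \<Rightarrow> 'a) \<Rightarrow> 'a \<Rightarrow> 'a \<Rightarrow> bool" where
  "GLP s x f \<longleftrightarrow> projection s f \<and>
     (\<exists>n\<ge>1. f * x ^ n = x ^ n \<and> (\<forall>y. y * x ^ n = 0 \<longrightarrow> y * f = 0))"

definition central :: "'a::ring_1 \<Rightarrow> bool" where
  "central h \<longleftrightarrow> (\<forall>x. h * x = x * h)"

definition very_orthogonal :: "('a::ring_1 \<Rightarrow> 'a) \<Rightarrow> 'a \<Rightarrow> 'a \<Rightarrow> bool" where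
  "very_orthogonal s e f \<longleftrightarrow> (\<exists>h. projection s h \<and> central h \<and> h * e = e \<and> h * f = 0)"

end

theory Submission
  imports Defs
begin

lemma idem_pow: "(e::'a::ring_1) = e * e \<Longrightarrow> n \<ge> 1 \<Longrightarrow> e ^ n = e"
proof (induction n)
  case 0 then show ?case by simp
next
  case (Suc n) then show ?case by (cases n) (auto simp: mult.assoc)
qed

theorem mainTheorem18:
  fixes s :: "'a::ring_1 \<Rightarrow> 'a" and e f :: 'a
  assumes "involution s" and "gen_rickart s"
    and "projection s e" and "projection s f"
    and "very_orthogonal s e f"
  shows "e * f = 0 \<and> (\<forall>p q. GRP s e p \<and> GLP s f q \<longrightarrow> p * q = 0) \<and> (\<forall>x. e * x * f = 0)"
proof -
  obtain h where hp: "projection s h" and hc: "central h" and he: "h * e = e" and hf: "h * f = 0"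
    using assms(5) unfolding very_orthogonal_def by blast
  have comm: "\<And>x. h * x = x * h" using hc unfolding central_def by blast
  have ee: "e = e * e" and ff: "f = f * f" using assms(3,4) unfolding projection_def by auto
  have 1: "e * f = 0" by (metis he comm hf mult.assoc mult_zero_right)
  have 3: "\<forall>x. e * x * f = 0"
  proof
    fix x
    have "e * x * f = h * e * x * f" using he by simp
    also have "\<dots> = e * x * (h * f)" by (metis comm mult.assoc)
    finally show "e * x * f = 0" using hf by simp
  qed
  have 2: "\<forall>p q. GRP s e p \<and> GLP s f q \<longrightarrow> p * q = 0"
  proof (intro allI impI)
    fix p q assume a: "GRP s e p \<and> GLP s f q"
    then obtain n where n: "n \<ge> 1" "\<forall>y. e ^ n * y = 0 \<longrightarrow> p * y = 0"
      unfolding GRP_def by blast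
    obtain m where m: "m \<ge> 1" "\<forall>y. y * f ^ m = 0 \<longrightarrow> y * q = 0"
      using a unfolding GLP_def by blast
    have "e * (1 - h) = 0" using he comm by (simp add: algebra_simps)
    hence "p * (1 - h) = 0" using n idem_pow[OF ee n(1)] by simp
    hence ph: "p = p * h" by (simp add: algebra_simps)
    have "h * q = 0" using m idem_pow[OF ff m(1)] hf by simp
    hence "p * h * q = 0" by (simp add: mult.assoc)
    thus "p * q = 0" using ph by simp
  qed
  show ?thesis using 1 2 3 by blast
qed

end
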